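(* Let $T\in(0,\infty)$ and $Q\in\mathbb N$. Then for all $n\in\mathbb N_0$ and $k\in\mathbb N_0\cap[0,2Q-n)$, $$\sum_{t\in[0,T]}\bar q^{n,Q}(t)\,\frac{(T-t)^k}{k!}=\frac{T^{n+k}}{(n+k)!}.$$
   Context: For $n\in\mathbb N$ let $c^n_1,\dots,c^n_n\in[-1,1]$ be the $n$ distinct roots of $x\mapsto\frac{1}{2^nn!}\frac{d^n}{dx^n}[(x^2-1)^n]$. For $a\in\mathbb R$, $b\in[a,\infty)$ let $q^{n,[a,b]}\colon[a,b]\to\mathbb R$ be $q^{n,[a,b]}(t)=\int_a^b\prod_{i:\,c^n_i\neq\frac{2t-(a+b)}{b-a}}\frac{2x-(b-a)c^n_i-(a+b)}{2t-(b-a)c^n_i-(a+b)}\,dx$ if $a<b$ and $\frac{2t-(a+b)}{b-a}\in\{c^n_1,\dots,c^n_n\}$, and $q^{n,[a,b]}(t)=0$ otherwise. Sums $\sum_{t\in[a,b]}$ range over the finitely many points with nonzero weight. For $Q\in\mathbb N$ define $\bar q^{n,Q}\colon[0,T]\to\mathbb R$ by $\bar q^{0,Q}(t)=\mathbb 1_{\{0\}}(t)$ and $\bar q^{n,Q}(t)=\sum_{s\in[0,t]}\bar q^{n-1,Q}(s)\,q^{Q,[s,T]}(t)$ for $n\in\mathbb N$. *)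

theory Defs
  imports "HOL-Analysis.Analysis" "HOL-Computational_Algebra.Polynomial"
begin

definition legendre :: "nat \<Rightarrow> real poly" where
  "legendre n = smult (1 / (2 ^ n * fact n)) ((pderiv ^^ n) ([:-1, 0, 1:] ^ n))"

definition legendre_roots :: "nat \<Rightarrow> real set" where
  "legendre_roots n = {x. poly (legendre n) x = 0}"

definition gl_weight :: "nat \<Rightarrow> real \<Rightarrow> real \<Rightarrow> real \<Rightarrow> real" where
  "gl_weight n a b t =
     (let s = (2 * t - (a + b)) / (b - a) in
      if a < b \<and> s \<in> legendre_roots n then
        integral {a..b} (\<lambda>x. \<Prod>c\<in>legendre_roots n - {s}.
           (2 * x - (b - a) * c - (a + b)) / (2 * t - (b - a) * c - (a + b)))
      else 0)"

text \<open>Iterated weights \<bar>q^{n,Q} on [0,T]; sums range over the points of nonzero weight.\<close>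
primrec qbar :: "real \<Rightarrow> nat \<Rightarrow> nat \<Rightarrow> real \<Rightarrow> real" where
  "qbar T Q 0 t = (if t = 0 then 1 else 0)"
| "qbar T Q (Suc n) t =
     (\<Sum>s\<in>{s\<in>{0..t}. qbar T Q n s \<noteq> 0}. qbar T Q n s * gl_weight Q s T t)"

end

theory Submission
  imports Defs
begin


lemma poly_rolle:
  fixes p :: "real poly"
  assumes "a < b" "poly p a = poly p b"
  shows "\<exists>z. a < z \<and> z < b \<and> poly (pderiv p) z = 0"
proof -
  have "\<exists>z. a < z \<and> z < b \<and> (*) (poly (pderiv p) z) = (\<lambda>v. 0)"
    apply (rule Rolle_deriv[OF assms, where f'="\<lambda>z. (*) (poly (pderiv p) z)"])
     apply (intro continuous_intros)
    using poly_DERIV[of p] by (simp add: has_field_derivative_def)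
  then obtain z where "a < z" "z < b" "(*) (poly (pderiv p) z) = (\<lambda>v. 0)" by blast
  then show ?thesis by (metis mult.right_neutral)
qed

lemma poly_ftc:
  fixes p :: "real poly"
  assumes "a \<le> b"
  shows "((\<lambda>x. poly (pderiv p) x) has_integral (poly p b - poly p a)) {a..b}"
  apply (rule fundamental_theorem_of_calculus[OF assms])
  using poly_DERIV[of p]
  by (metis has_real_derivative_iff_has_vector_derivative has_field_derivative_at_within)

lemma rolle_count:
  fixes p :: "real poly"
  assumes "finite S" "S \<noteq> {}" "\<And>x. x \<in> S \<Longrightarrow> poly p x = 0"
  shows "\<exists>S'. finite S' \<and> S' \<subseteq> {Min S<..<Max S} \<and> card S' = card S - 1 \<and> (\<forall>x\<in>S'. poly (pderiv p) x = 0)"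
  using assms
proof (induction "card S" arbitrary: S rule: less_induct)
  case less
  show ?case
  proof (cases "card S = 1")
    case True
    then show ?thesis by (intro exI[of _ "{}"]) auto
  next
    case False
    define M where "M = Max S"
    define S0 where "S0 = S - {M}"
    have M: "M \<in> S" using less M_def by simp
    have cS: "card S0 = card S - 1" using M less S0_def by simp
    have S0ne: "S0 \<noteq> {}"
    proof
      assume "S0 = {}"
      then have "S = {M}" using M S0_def by auto
      then show False using False by simp
    qed
    have fin0: "finite S0" using less S0_def by simp
    have "card S > 0" using less by (simp add: card_gt_0_iff)
    then obtain S1 where S1f: "finite S1" and S1: "S1 \<subseteq> {Min S0<..<Max S0}" "card S1 = card S0 - 1" "\<forall>x\<in>S1. poly (pderiv p) x = 0"
      using less.hyps[of S0] cS fin0 S0ne less.prems S0_def by auto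
    have m0: "Max S0 < M" using fin0 S0ne S0_def M_def less.prems
      by (metis DiffD1 DiffD2 Max_ge Max_in order_le_neq_trans singletonI)
    have "Max S0 \<in> S" using fin0 S0ne S0_def by (metis DiffD1 Max_in)
    then obtain z where z: "Max S0 < z" "z < M" "poly (pderiv p) z = 0"
      using poly_rolle[OF m0, of p] less.prems M by auto
    have SI: "S = insert M S0" using M S0_def by auto
    have mm: "Min S0 \<le> Max S0" using fin0 S0ne by (simp add: Min_le Max_in)
    have minS: "Min S = Min S0" using fin0 S0ne SI m0 mm by (simp add: Min_insert)
    show ?thesis
    proof (intro exI[of _ "insert z S1"] conjI)
      have "z > Min S" using z minS mm by simp
      moreover have "S1 \<subseteq> {Min S<..<Max S}" using S1(1) minS m0 M_def by fastforce
      ultimately show "insert z S1 \<subseteq> {Min S<..<Max S}" using z M_def by auto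
      have "z \<notin> S1" using S1 z by auto
      then show "card (insert z S1) = card S - 1"
        using S1 S1f cS fin0 S0ne \<open>card S > 0\<close> False by simp
      show "finite (insert z S1)" using S1f by simp
      show "\<forall>x\<in>insert z S1. poly (pderiv p) x = 0" using S1 z by auto
    qed
  qed
qed

lemma dvd_pderiv_step:
  fixes q :: "real poly"
  assumes "r ^ Suc k dvd q"
  shows "r ^ k dvd pderiv q"
proof -
  obtain g where g: "q = r ^ Suc k * g" using assms by (auto simp: dvd_def)
  have "pderiv q = r ^ Suc k * pderiv g + g * (smult (of_nat (Suc k)) (r ^ k) * pderiv r)"
    by (simp only: g pderiv_mult pderiv_power_Suc)
  also have "\<dots> = r ^ k * (r * pderiv g + g * smult (of_nat (Suc k)) (pderiv r))"
    by (simp add: algebra_simps)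
  finally show ?thesis by simp
qed

lemma dvd_pderiv_iter:
  fixes q :: "real poly"
  assumes "r ^ m dvd q" "j \<le> m"
  shows "r ^ (m - j) dvd (pderiv ^^ j) q"
  using assms(2)
proof (induction j)
  case 0 then show ?case using assms by simp
next
  case (Suc j)
  then have "r ^ Suc (m - Suc j) dvd (pderiv ^^ j) q" using Suc_diff_Suc by (simp add: Suc_diff_Suc)
  then show ?case using dvd_pderiv_step by simp
qed

definition rod :: "nat \<Rightarrow> real poly" where "rod Q = [:-1,0,1:] ^ Q"

lemma rod_factor: "rod Q = [:-1,1:] ^ Q * [:1,1:] ^ Q"
  by (simp add: rod_def power_mult_distrib[symmetric])

lemma rod_vanish:
  assumes "j < Q"
  shows "poly ((pderiv ^^ j) (rod Q)) 1 = 0" "poly ((pderiv ^^ j) (rod Q)) (-1) = 0"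
proof -
  have "[:-1,1:] ^ Q dvd rod Q" by (simp add: rod_factor)
  from dvd_pderiv_iter[OF this, of j] assms
  have "[:-1,1:] ^ (Q - j) dvd (pderiv ^^ j) (rod Q)" by simp
  then obtain g where "(pderiv ^^ j) (rod Q) = [:-1,1:] ^ (Q - j) * g" by (auto simp: dvd_def)
  then show "poly ((pderiv ^^ j) (rod Q)) 1 = 0" using assms by simp
  have "[:- (-1),1:] ^ Q dvd rod Q" by (simp add: rod_factor)
  from dvd_pderiv_iter[OF this, of j] assms
  have "[:-(-1),1:] ^ (Q - j) dvd (pderiv ^^ j) (rod Q)" by simp
  then obtain g where "(pderiv ^^ j) (rod Q) = [:-(-1),1:] ^ (Q - j) * g" by (auto simp: dvd_def)
  then show "poly ((pderiv ^^ j) (rod Q)) (-1) = 0" using assms by simp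
qed

lemma degree_pderiv_iter: "degree ((pderiv ^^ j) (p :: real poly)) = degree p - j"
  by (induction j) (auto simp: degree_pderiv)

lemma degree_rod: "degree (rod Q) = 2 * Q"
  by (simp add: rod_def degree_power_eq)



lemma rod_roots:
  assumes "j \<le> Q"
  shows "\<exists>Z. finite Z \<and> Z \<subseteq> {-1<..<1} \<and> card Z = j \<and> (\<forall>x\<in>Z. poly ((pderiv ^^ j) (rod Q)) x = 0)"
  using assms
proof (induction j)
  case 0 then show ?case by (intro exI[of _ "{}"]) auto
next
  case (Suc j)
  then obtain Z where Z: "finite Z" "Z \<subseteq> {-1<..<1}" "card Z = j" "\<forall>x\<in>Z. poly ((pderiv ^^ j) (rod Q)) x = 0"
    by auto
  define S where "S = insert (-1) (insert 1 Z)"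
  have fS: "finite S" "S \<noteq> {}" using Z S_def by auto
  have n1: "-1 \<notin> Z" "1 \<notin> Z" using Z by auto
  have cS: "card S = j + 2" using Z S_def n1 by simp
  have mS: "Min S = -1" using Z S_def fS by (intro Min_eqI) (auto simp: subset_iff)
  have MS: "Max S = 1" using Z S_def fS by (intro Max_eqI) (auto simp: subset_iff)
  have "\<forall>x\<in>S. poly ((pderiv ^^ j) (rod Q)) x = 0" using Z rod_vanish[of j Q] Suc.prems S_def by auto
  from rolle_count[OF fS, of "(pderiv ^^ j) (rod Q)"] this
  obtain S' where "finite S'" "S' \<subseteq> {-1<..<1}" "card S' = j + 1" "\<forall>x\<in>S'. poly ((pderiv ^^ Suc j) (rod Q)) x = 0"
    using cS mS MS by auto
  then show ?case by auto
qed

lemma legendre_eq: "legendre Q = smult (1 / (2 ^ Q * fact Q)) ((pderiv ^^ Q) (rod Q))"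
  by (simp add: legendre_def rod_def)

lemma legendre_props:
  assumes "Q \<ge> 1"
  shows "legendre Q \<noteq> 0" "degree (legendre Q) = Q" "finite (legendre_roots Q)"
        "card (legendre_roots Q) = Q" "legendre_roots Q \<subseteq> {-1<..<1}"
proof -
  have dQ: "degree ((pderiv ^^ Q) (rod Q)) = Q" by (simp add: degree_pderiv_iter degree_rod)
  then have nz: "(pderiv ^^ Q) (rod Q) \<noteq> 0" using assms by auto
  have c: "1 / (2 ^ Q * fact Q) \<noteq> (0::real)" by simp
  show "legendre Q \<noteq> 0" using nz c by (simp add: legendre_eq)
  show dl: "degree (legendre Q) = Q" using dQ c by (simp add: legendre_eq)
  have R: "legendre_roots Q = {x. poly ((pderiv ^^ Q) (rod Q)) x = 0}"
    using c by (simp add: legendre_roots_def legendre_eq)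
  show fR: "finite (legendre_roots Q)" using R nz poly_roots_finite by simp
  have cR: "card (legendre_roots Q) \<le> Q" using R nz card_poly_roots_bound[OF nz] dQ by simp
  obtain Z where Z: "finite Z" "Z \<subseteq> {-1<..<1}" "card Z = Q" "\<forall>x\<in>Z. poly ((pderiv ^^ Q) (rod Q)) x = 0"
    using rod_roots[of Q Q] by auto
  have "Z \<subseteq> legendre_roots Q" using Z R by auto
  moreover have "card (legendre_roots Q) \<ge> Q" using card_mono[OF fR \<open>Z \<subseteq> legendre_roots Q\<close>] Z by simp
  ultimately have "Z = legendre_roots Q" using card_subset_eq[OF fR] cR Z by simp
  then show "card (legendre_roots Q) = Q" "legendre_roots Q \<subseteq> {-1<..<1}" using Z by auto
qed

lemma rod_orth:
  assumes "m \<le> Q" "degree q < m"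
  shows "((\<lambda>x. poly q x * poly ((pderiv ^^ m) (rod Q)) x) has_integral 0) {-1..1}"
  using assms
proof (induction m arbitrary: q)
  case 0 then show ?case by simp
next
  case (Suc m)
  have I1: "((\<lambda>x. poly (pderiv (q * (pderiv ^^ m) (rod Q))) x) has_integral 0) {-1..1}"
    using poly_ftc[of "-1" 1 "q * (pderiv ^^ m) (rod Q)"] rod_vanish[of m Q] Suc.prems by simp
  have I2: "((\<lambda>x. poly (pderiv q) x * poly ((pderiv ^^ m) (rod Q)) x) has_integral 0) {-1..1}"
  proof (cases "m = 0")
    case True
    then have "pderiv q = 0" using Suc.prems by (simp add: pderiv_eq_0_iff)
    then show ?thesis by simp
  next
    case False
    then have "degree (pderiv q) < m" using Suc.prems by (simp add: degree_pderiv)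
    then show ?thesis using Suc.IH Suc.prems by simp
  qed
  have "((\<lambda>x. poly (pderiv (q * (pderiv ^^ m) (rod Q))) x - poly (pderiv q) x * poly ((pderiv ^^ m) (rod Q)) x) has_integral 0 - 0) {-1..1}"
    by (rule has_integral_diff[OF I1 I2])
  then show ?case by (simp add: pderiv_mult algebra_simps)
qed

lemma legendre_orth:
  assumes "degree q < Q"
  shows "((\<lambda>x. poly q x * poly (legendre Q) x) has_integral 0) {-1..1}"
  using has_integral_mult_right[OF rod_orth[OF order.refl assms], of "1 / (2 ^ Q * fact Q)"]
  by (simp add: legendre_eq algebra_simps)




definition lagp :: "real set \<Rightarrow> real \<Rightarrow> real poly" where
  "lagp R c = (\<Prod>d\<in>R-{c}. smult (1 / (c - d)) [:-d, 1:])"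

lemma poly_lagp: "poly (lagp R c) u = (\<Prod>d\<in>R-{c}. (u - d) / (c - d))"
  by (simp add: lagp_def poly_prod diff_divide_distrib)

lemma degree_lagp: "finite R \<Longrightarrow> c \<in> R \<Longrightarrow> degree (lagp R c) \<le> card R - 1"
proof -
  assume f: "finite R" and cR: "c \<in> R"
  have "degree (lagp R c) \<le> sum (degree \<circ> (\<lambda>d. smult (1 / (c - d)) [:-d, 1:])) (R - {c})"
    unfolding lagp_def using f by (intro degree_prod_sum_le) auto
  also have "\<dots> \<le> sum (\<lambda>_. 1) (R - {c})"
    by (intro sum_mono) (simp add: degree_smult_le)
  also have "\<dots> \<le> card R - 1" using f
    using cR by simp
  finally show ?thesis .
qed

lemma lagrange_interp:
  fixes r :: "real poly"
  assumes "finite R" "degree r < card R"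
  shows "poly r u = (\<Sum>c\<in>R. poly r c * (\<Prod>d\<in>R-{c}. (u - d) / (c - d)))"
proof -
  define P where "P = r - (\<Sum>c\<in>R. smult (poly r c) (lagp R c))"
  have dS: "degree (\<Sum>c\<in>R. smult (poly r c) (lagp R c)) \<le> card R - 1"
    by (rule degree_sum_le[OF assms(1)]) (rule order.trans[OF degree_smult_le degree_lagp[OF assms(1)]], assumption)
  have dP: "degree P \<le> card R - 1" unfolding P_def
    using degree_diff_le[OF _ dS, of r] assms by simp
  have lag1: "poly (lagp R c) c' = (if c' = c then 1 else 0)" if "c \<in> R" "c' \<in> R" for c c'
  proof (cases "c' = c")
    case True then show ?thesis by (simp add: poly_lagp)
  next
    case False
    then have "c' \<in> R - {c}" using that by simp
    then show ?thesis using False assms(1) by (simp add: poly_lagp prod_zero_iff)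
  qed
  have vanish: "poly P c' = 0" if "c' \<in> R" for c'
  proof -
    have "(\<Sum>c\<in>R. poly r c * poly (lagp R c) c') = (\<Sum>c\<in>R. if c = c' then poly r c' else 0)"
      by (intro sum.cong) (auto simp: lag1 that)
    also have "\<dots> = poly r c'" using assms(1) that by simp
    finally show ?thesis by (simp add: P_def poly_sum)
  qed
  have "P = 0"
  proof (rule ccontr)
    assume nz: "P \<noteq> 0"
    have "R \<subseteq> {x. poly P x = 0}" using vanish by auto
    then have "card R \<le> card {x. poly P x = 0}" using poly_roots_finite[OF nz] by (simp add: card_mono)
    also have "\<dots> \<le> degree P" using card_poly_roots_bound[OF nz] .
    finally show False using dP assms(2) by linarith
  qed
  then have "poly r u = poly (\<Sum>c\<in>R. smult (poly r c) (lagp R c)) u" unfolding P_def by simp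
  then show ?thesis by (simp add: poly_sum poly_lagp)
qed

lemma cont_lag: "continuous_on (S::real set) (\<lambda>u. \<Prod>d\<in>R-{c}. (u - d) / (c - d::real))"
proof -
  have eq: "(\<lambda>u. \<Prod>d\<in>R-{c}. (u - d) / (c - d)) = (\<lambda>u. poly (lagp R c) u)"
    by (simp add: poly_lagp)
  show ?thesis unfolding eq by (rule continuous_on_poly[OF continuous_on_id])
qed

lemma gauss_ref:
  fixes P :: "real poly"
  assumes "Q \<ge> 1" "degree P < 2 * Q"
  shows "(\<Sum>c\<in>legendre_roots Q. integral {-1..1} (\<lambda>u. \<Prod>d\<in>legendre_roots Q-{c}. (u - d) / (c - d)) * poly P c)
          = integral {-1..1} (poly P)"
proof -
  define R where "R = legendre_roots Q"
  define L where "L = legendre Q"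
  define q where "q = P div L"
  define r where "r = P mod L"
  have Lnz: "L \<noteq> 0" and dL: "degree L = Q" and fR: "finite R" and cR: "card R = Q"
    using legendre_props[OF assms(1)] by (auto simp: L_def R_def)
  have Pe: "P = q * L + r" by (simp add: q_def r_def)
  have dr: "r = 0 \<or> degree r < Q" using degree_mod_less[OF Lnz, of P] dL by (simp add: r_def)
  then have dr': "degree r < Q" using assms(1) by auto
  have dq: "degree q < Q"
  proof (cases "q = 0")
    case True then show ?thesis using assms(1) by simp
  next
    case False
    have d1: "degree (q * L) = degree q + Q" using False Lnz dL by (simp add: degree_mult_eq)
    have "degree P = degree (q * L)" unfolding Pe using d1 dr' by (intro degree_add_eq_left) simp
    then show ?thesis using d1 assms(2) by simp
  qed
  have rootL: "poly L c = 0" if "c \<in> R" for c using that by (simp add: R_def L_def legendre_roots_def)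
  have Pc: "poly P c = poly r c" if "c \<in> R" for c using rootL[OF that] by (simp add: Pe)
  have I1: "((\<lambda>x. poly (q * L) x) has_integral 0) {-1..1}"
    using legendre_orth[OF dq] by (simp add: L_def)
  have Ilag: "((\<lambda>u. \<Prod>d\<in>R-{c}. (u - d) / (c - d)) has_integral
                integral {-1..1} (\<lambda>u. \<Prod>d\<in>R-{c}. (u - d) / (c - d))) {-1..1}" for c
    by (intro integrable_integral integrable_continuous_interval cont_lag)
  have I2: "((\<lambda>u. \<Sum>c\<in>R. poly r c * (\<Prod>d\<in>R-{c}. (u - d) / (c - d))) has_integral
            (\<Sum>c\<in>R. poly r c * integral {-1..1} (\<lambda>u. \<Prod>d\<in>R-{c}. (u - d) / (c - d)))) {-1..1}"
    apply (rule has_integral_sum[OF fR])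
    apply (rule has_integral_mult_right)
    apply (rule Ilag)
    done
  have I2': "(poly r has_integral
            (\<Sum>c\<in>R. poly r c * integral {-1..1} (\<lambda>u. \<Prod>d\<in>R-{c}. (u - d) / (c - d)))) {-1..1}"
  proof -
    have dR: "degree r < card R" using dr' cR by simp
    have eq: "(\<lambda>u. \<Sum>c\<in>R. poly r c * (\<Prod>d\<in>R-{c}. (u - d) / (c - d))) = poly r"
      by (rule ext, rule sym, rule lagrange_interp[OF fR dR])
    show ?thesis using I2 unfolding eq .
  qed
  have HI: "((\<lambda>x. poly (q * L) x + poly r x) has_integral 0 + (\<Sum>c\<in>R. poly r c * integral {-1..1} (\<lambda>u. \<Prod>d\<in>R-{c}. (u - d) / (c - d)))) {-1..1}"
    by (rule has_integral_add[OF I1 I2'])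
  have eqP: "(\<lambda>x. poly (q * L) x + poly r x) = poly P" by (rule ext) (simp add: Pe)
  have "(poly P has_integral 0 + (\<Sum>c\<in>R. poly r c * integral {-1..1} (\<lambda>u. \<Prod>d\<in>R-{c}. (u - d) / (c - d)))) {-1..1}"
    using HI unfolding eqP .
  then have "integral {-1..1} (poly P) = (\<Sum>c\<in>R. poly r c * integral {-1..1} (\<lambda>u. \<Prod>d\<in>R-{c}. (u - d) / (c - d)))"
    by (simp add: integral_unique)
  also have "\<dots> = (\<Sum>c\<in>R. integral {-1..1} (\<lambda>u. \<Prod>d\<in>R-{c}. (u - d) / (c - d)) * poly P c)"
    by (intro sum.cong) (auto simp: Pc)
  finally show ?thesis by (simp add: R_def)
qed

lemma subst_ab:
  fixes a b J :: real
  assumes ab: "a < b" and H: "(g has_integral J) {-1..1}"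
  shows "((\<lambda>x. g ((2 * x - (a + b)) / (b - a))) has_integral (b - a) / 2 * J) {a..b}"
proof -
  define m where "m = 2 / (b - a)"
  define c where "c = - (a + b) / (b - a)"
  have m: "m > 0" using ab by (simp add: m_def)
  have H': "(g has_integral J) (cbox (-1) 1)" using H by simp
  from has_integral_affinity'[OF H' m, of c]
  have "((\<lambda>x. g (m * x + c)) has_integral inverse m * J) {inverse m * (- 1 - c)..inverse m * (1 - c)}"
    by simp
  moreover have "inverse m * (- 1 - c) = a" "inverse m * (1 - c) = b" using ab
    by (simp_all add: m_def c_def field_simps)
  moreover have "(\<lambda>x. g (m * x + c)) = (\<lambda>x. g ((2 * x - (a + b)) / (b - a)))"
    using ab by (intro ext arg_cong[where f=g]) (simp add: m_def c_def diff_divide_distrib add_divide_distrib)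
  moreover have "inverse m * J = (b - a) / 2 * J" by (simp add: m_def)
  ultimately show ?thesis by simp
qed

lemma node_s:
  fixes a b c :: real
  assumes "a < b"
  shows "(2 * (((b - a) * c + a + b) / 2) - (a + b)) / (b - a) = c"
  using assms by (simp add: field_simps)

lemma gl_weight_node:
  fixes a b c :: real
  assumes ab: "a < b" and Q: "Q \<ge> 1" and c: "c \<in> legendre_roots Q"
  shows "gl_weight Q a b (((b - a) * c + a + b) / 2) =
         (b - a) / 2 * integral {-1..1} (\<lambda>u. \<Prod>d\<in>legendre_roots Q-{c}. (u - d) / (c - d))"
proof -
  define R where "R = legendre_roots Q"
  define t where "t = ((b - a) * c + a + b) / 2"
  have Ilag: "((\<lambda>u. \<Prod>d\<in>R-{c}. (u - d) / (c - d)) has_integral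
                integral {-1..1} (\<lambda>u. \<Prod>d\<in>R-{c}. (u - d) / (c - d))) {-1..1}"
    by (intro integrable_integral integrable_continuous_interval cont_lag)
  from subst_ab[OF ab Ilag]
  have H: "((\<lambda>x. \<Prod>d\<in>R-{c}. ((2 * x - (a + b)) / (b - a) - d) / (c - d)) has_integral
      (b - a) / 2 * integral {-1..1} (\<lambda>u. \<Prod>d\<in>R-{c}. (u - d) / (c - d))) {a..b}" .
  have eq: "(\<Prod>d\<in>R-{c}. ((2 * x - (a + b)) / (b - a) - d) / (c - d)) =
            (\<Prod>d\<in>R-{c}. (2 * x - (b - a) * d - (a + b)) / (2 * t - (b - a) * d - (a + b)))" for x
  proof (intro prod.cong refl)
    fix d assume d: "d \<in> R - {c}"
    have cd: "c - d \<noteq> 0" using d by simp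
    have "2 * t - (b - a) * d - (a + b) = (b - a) * (c - d)" by (simp add: t_def field_simps)
    moreover have "2 * x - (b - a) * d - (a + b) = (b - a) * ((2 * x - (a + b)) / (b - a) - d)"
      using ab by (simp add: field_simps)
    ultimately show "((2 * x - (a + b)) / (b - a) - d) / (c - d) =
            (2 * x - (b - a) * d - (a + b)) / (2 * t - (b - a) * d - (a + b))"
      using ab cd by simp
  qed
  have "gl_weight Q a b t = integral {a..b} (\<lambda>x. \<Prod>d\<in>R-{c}. (2 * x - (b - a) * d - (a + b)) / (2 * t - (b - a) * d - (a + b)))"
    using ab c node_s[OF ab, of c] by (simp add: gl_weight_def Let_def R_def t_def)
  also have "\<dots> = (b - a) / 2 * integral {-1..1} (\<lambda>u. \<Prod>d\<in>R-{c}. (u - d) / (c - d))"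
    using H unfolding eq by (rule integral_unique)
  finally show ?thesis by (simp add: t_def R_def)
qed

lemma gl_weight_nz:
  assumes "gl_weight Q a b t \<noteq> 0"
  shows "a < b \<and> t \<in> (\<lambda>c. ((b - a) * c + a + b) / 2) ` legendre_roots Q"
proof -
  have ab: "a < b" and s: "(2 * t - (a + b)) / (b - a) \<in> legendre_roots Q"
    using assms by (auto simp: gl_weight_def Let_def split: if_splits)
  have "t = ((b - a) * ((2 * t - (a + b)) / (b - a)) + a + b) / 2" using ab by (simp add: field_simps)
  then show ?thesis using ab s by blast
qed

lemma nodes_in:
  assumes "a < b" "Q \<ge> 1" "c \<in> legendre_roots Q"
  shows "a < ((b - a) * c + a + b) / 2" "((b - a) * c + a + b) / 2 < b"
proof -
  have "-1 < c" "c < 1" using legendre_props(5)[OF assms(2)] assms(3) by auto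
  then have "(b - a) * (-1) < (b - a) * c" "(b - a) * c < (b - a) * 1" using assms(1) by (intro mult_strict_left_mono; simp)+
  then show "a < ((b - a) * c + a + b) / 2" "((b - a) * c + a + b) / 2 < b" by simp_all
qed

lemma gauss_ab:
  fixes p :: "real poly"
  assumes ab: "a < b" and Q: "Q \<ge> 1" and dp: "degree p < 2 * Q"
  shows "(\<Sum>t\<in>(\<lambda>c. ((b - a) * c + a + b) / 2) ` legendre_roots Q. gl_weight Q a b t * poly p t)
         = integral {a..b} (poly p)"
proof -
  define R where "R = legendre_roots Q"
  define P where "P = pcompose p [:(a + b) / 2, (b - a) / 2:]"
  have inj: "inj_on (\<lambda>c. ((b - a) * c + a + b) / 2) R" using ab by (auto simp: inj_on_def)
  have dP: "degree P < 2 * Q" using dp ab by (simp add: P_def degree_pcompose)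
  have pP: "poly P c = poly p (((b - a) * c + a + b) / 2)" for c
    by (simp add: P_def poly_pcompose, rule arg_cong[where f="poly p"], simp add: field_simps)
  have "(\<Sum>t\<in>(\<lambda>c. ((b - a) * c + a + b) / 2) ` R. gl_weight Q a b t * poly p t)
      = (\<Sum>c\<in>R. gl_weight Q a b (((b - a) * c + a + b) / 2) * poly p (((b - a) * c + a + b) / 2))"
    using inj by (simp add: sum.reindex)
  also have "\<dots> = (\<Sum>c\<in>R. (b - a) / 2 * (integral {-1..1} (\<lambda>u. \<Prod>d\<in>R-{c}. (u - d) / (c - d)) * poly P c))"
    by (intro sum.cong refl) (simp add: gl_weight_node[OF ab Q] R_def pP)
  also have "\<dots> = (b - a) / 2 * integral {-1..1} (poly P)"
    unfolding R_def by (subst sum_distrib_left[symmetric]) (simp only: gauss_ref[OF Q dP])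
  also have "\<dots> = integral {a..b} (poly p)"
  proof -
    have HP: "(poly P has_integral integral {-1..1} (poly P)) {-1..1}"
      by (intro integrable_integral integrable_continuous_interval continuous_on_poly continuous_on_id)
    from subst_ab[OF ab HP]
    have H: "((\<lambda>x. poly P ((2 * x - (a + b)) / (b - a))) has_integral (b - a) / 2 * integral {-1..1} (poly P)) {a..b}" .
    have "(\<lambda>x. poly P ((2 * x - (a + b)) / (b - a))) = poly p"
    proof
      fix x
      have "((b - a) * ((2 * x - (a + b)) / (b - a)) + a + b) / 2 = x" using ab by simp
      then show "poly P ((2 * x - (a + b)) / (b - a)) = poly p x" by (simp only: pP)
    qed
    then show ?thesis using H by (metis integral_unique)
  qed
  finally show ?thesis by (simp add: R_def)
qed



lemma poly_tk: fixes T t :: real shows "poly (smult (1 / fact k) ([:T, -1:] ^ k)) t = (T - t) ^ k / fact k"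
  by (auto simp: poly_power algebra_simps)

lemma degree_tk: "degree (smult (1 / fact k) ([:T::real, -1:] ^ k)) \<le> k"
proof -
  have "degree ([:T::real, -1:] ^ k) \<le> degree [:T::real, -1:] * k" by (rule degree_power_le)
  then show ?thesis by simp
qed

lemma integral_tk:
  fixes T s :: real
  assumes "s \<le> T"
  shows "integral {s..T} (poly (smult (1 / fact k) ([:T, -1:] ^ k))) = (T - s) ^ (Suc k) / fact (Suc k)"
proof -
  define Pa where "Pa = smult (- 1 / fact (Suc k)) ([:T::real, -1:] ^ Suc k)"
  have pd: "pderiv [:T::real, -1:] = [:-1:]" by (simp add: pderiv_pCons)
  have "pderiv Pa = smult (- 1 / fact (Suc k)) (smult (of_nat (Suc k)) ([:T, -1:] ^ k) * [:-1:])"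
    using pd by (simp only: Pa_def pderiv_smult pderiv_power_Suc)
  also have "\<dots> = smult (1 / fact k) ([:T, -1:] ^ k)"
    by (simp add: smult_smult del: of_nat_Suc)
  finally have d: "pderiv Pa = smult (1 / fact k) ([:T, -1:] ^ k)" .
  have "(poly (smult (1 / fact k) ([:T, -1:] ^ k)) has_integral (poly Pa T - poly Pa s)) {s..T}"
    using poly_ftc[OF assms, of Pa] unfolding d .
  moreover have "poly Pa T - poly Pa s = (T - s) ^ (Suc k) / fact (Suc k)"
    by (simp add: Pa_def poly_power, simp add: algebra_simps)
  ultimately show ?thesis by (simp add: integral_unique)
qed

lemma supp_props:
  fixes T :: real
  assumes T: "T > 0" and Q: "Q \<ge> 1"
  shows "finite {t. qbar T Q n t \<noteq> 0} \<and> {t. qbar T Q n t \<noteq> 0} \<subseteq> {0..T}"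
proof (induction n)
  case 0
  then show ?case using T by auto
next
  case (Suc n)
  let ?A = "{t. qbar T Q n t \<noteq> 0}"
  let ?N = "\<lambda>s. (\<lambda>c. ((T - s) * c + s + T) / 2) ` legendre_roots Q"
  have sub: "{t. qbar T Q (Suc n) t \<noteq> 0} \<subseteq> (\<Union>s\<in>?A. ?N s) \<inter> {0..T}"
  proof
    fix t assume "t \<in> {t. qbar T Q (Suc n) t \<noteq> 0}"
    then have "(\<Sum>s\<in>{s\<in>{0..t}. qbar T Q n s \<noteq> 0}. qbar T Q n s * gl_weight Q s T t) \<noteq> 0" by simp
    then obtain s where s: "s \<in> {s\<in>{0..t}. qbar T Q n s \<noteq> 0}" "qbar T Q n s * gl_weight Q s T t \<noteq> 0"
      by (meson sum.neutral)
    then have g: "gl_weight Q s T t \<noteq> 0" by auto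
    from gl_weight_nz[OF g] have sT: "s < T" and tN: "t \<in> ?N s" by auto
    then obtain c where c: "c \<in> legendre_roots Q" "t = ((T - s) * c + s + T) / 2" by auto
    have "s < t" "t < T" using nodes_in[OF sT Q c(1)] c(2) by auto
    then show "t \<in> (\<Union>s\<in>?A. ?N s) \<inter> {0..T}" using s tN by auto
  qed
  have "finite (\<Union>s\<in>?A. ?N s)" using Suc legendre_props(3)[OF Q] by auto
  then show ?case using sub by (meson finite_Int finite_subset le_infE)
qed

lemma inner_sum:
  fixes T s :: real
  assumes Q: "Q \<ge> 1" and s: "s \<le> T" and fB: "finite B"
    and NB: "s < T \<Longrightarrow> (\<lambda>c. ((T - s) * c + s + T) / 2) ` legendre_roots Q \<subseteq> B"
    and k: "k < 2 * Q"
  shows "(\<Sum>t\<in>B. gl_weight Q s T t * ((T - t) ^ k / fact k)) = (T - s) ^ Suc k / fact (Suc k)"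
proof (cases "s < T")
  case False
  then have "s = T" using s by simp
  moreover have "gl_weight Q T T t = 0" for t by (simp add: gl_weight_def Let_def)
  ultimately show ?thesis by simp
next
  case True
  let ?N = "(\<lambda>c. ((T - s) * c + s + T) / 2) ` legendre_roots Q"
  let ?p = "smult (1 / fact k) ([:T, -1:] ^ k)"
  have "(\<Sum>t\<in>B. gl_weight Q s T t * ((T - t) ^ k / fact k)) = (\<Sum>t\<in>?N. gl_weight Q s T t * ((T - t) ^ k / fact k))"
  proof (rule sum.mono_neutral_right[OF fB NB[OF True]])
    show "\<forall>t\<in>B - ?N. gl_weight Q s T t * ((T - t) ^ k / fact k) = 0"
      using gl_weight_nz[of Q s T] by fastforce
  qed
  also have "\<dots> = (\<Sum>t\<in>?N. gl_weight Q s T t * poly ?p t)" by (simp only: poly_tk)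
  also have "\<dots> = integral {s..T} (poly ?p)"
    using gauss_ab[OF True Q, of ?p] degree_tk[of k T] k by simp
  also have "\<dots> = (T - s) ^ Suc k / fact (Suc k)" using integral_tk[OF s] .
  finally show ?thesis .
qed

lemma main_claim:
  fixes T :: real
  assumes T: "T > 0" and Q: "Q \<ge> 1"
  shows "\<forall>k. n + k < 2 * Q \<longrightarrow>
    (\<Sum>t\<in>{t. qbar T Q n t \<noteq> 0}. qbar T Q n t * (T - t) ^ k / fact k) = T ^ (n + k) / fact (n + k)"
proof (induction n)
  case 0
  have "{t. qbar T Q 0 t \<noteq> 0} = {0}" by auto
  then show ?case by simp
next
  case (Suc n)
  show ?case
  proof (intro allI impI)
    fix k assume nk: "Suc n + k < 2 * Q"
    let ?A = "{t. qbar T Q n t \<noteq> 0}"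
    let ?N = "\<lambda>s. (\<lambda>c. ((T - s) * c + s + T) / 2) ` legendre_roots Q"
    define B where "B = (\<Union>s\<in>?A. ?N s)"
    have fA: "finite ?A" and sA: "?A \<subseteq> {0..T}" using supp_props[OF T Q, of n] by auto
    have fB: "finite B" unfolding B_def using fA legendre_props(3)[OF Q] by auto
    have qS: "qbar T Q (Suc n) t = (\<Sum>s\<in>?A. qbar T Q n s * gl_weight Q s T t)" for t
    proof -
      have "qbar T Q (Suc n) t = (\<Sum>s\<in>{s\<in>{0..t}. qbar T Q n s \<noteq> 0}. qbar T Q n s * gl_weight Q s T t)"
        by simp
      also have "\<dots> = (\<Sum>s\<in>?A. qbar T Q n s * gl_weight Q s T t)"
      proof (rule sum.mono_neutral_left[OF fA])
        show "{s\<in>{0..t}. qbar T Q n s \<noteq> 0} \<subseteq> ?A" by auto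
        show "\<forall>s\<in>?A - {s\<in>{0..t}. qbar T Q n s \<noteq> 0}. qbar T Q n s * gl_weight Q s T t = 0"
        proof
          fix s assume s: "s \<in> ?A - {s\<in>{0..t}. qbar T Q n s \<noteq> 0}"
          then have "s \<ge> 0" using sA by auto
          then have st: "\<not> s \<le> t" using s by auto
          show "qbar T Q n s * gl_weight Q s T t = 0"
          proof (rule ccontr)
            assume "qbar T Q n s * gl_weight Q s T t \<noteq> 0"
            then have "gl_weight Q s T t \<noteq> 0" by auto
            from gl_weight_nz[OF this] obtain c where "s < T" "c \<in> legendre_roots Q" "t = ((T - s) * c + s + T) / 2"
              by auto
            then have "s < t" using nodes_in(1)[OF _ Q, of s T c] by auto
            then show False using st by simp
          qed
        qed
      qed
      finally show ?thesis .
    qed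
    have sub: "{t. qbar T Q (Suc n) t \<noteq> 0} \<subseteq> B"
    proof
      fix t assume "t \<in> {t. qbar T Q (Suc n) t \<noteq> 0}"
      then have "(\<Sum>s\<in>?A. qbar T Q n s * gl_weight Q s T t) \<noteq> 0" using qS by simp
      then obtain s where s: "s \<in> ?A" "qbar T Q n s * gl_weight Q s T t \<noteq> 0"
        by (meson sum.neutral)
      then have "gl_weight Q s T t \<noteq> 0" by auto
      from gl_weight_nz[OF this] show "t \<in> B" using s unfolding B_def by auto
    qed
    let ?f = "\<lambda>t. (T - t) ^ k / fact k"
    have "(\<Sum>t\<in>{t. qbar T Q (Suc n) t \<noteq> 0}. qbar T Q (Suc n) t * (T - t) ^ k / fact k)
        = (\<Sum>t\<in>B. qbar T Q (Suc n) t * (T - t) ^ k / fact k)"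
      by (rule sum.mono_neutral_left[OF fB sub]) auto
    also have "\<dots> = (\<Sum>t\<in>B. \<Sum>s\<in>?A. qbar T Q n s * (gl_weight Q s T t * ?f t))"
      by (intro sum.cong refl, simp only: qS sum_distrib_right sum_divide_distrib, intro sum.cong refl, simp)
    also have "\<dots> = (\<Sum>s\<in>?A. \<Sum>t\<in>B. qbar T Q n s * (gl_weight Q s T t * ?f t))"
      by (rule sum.swap)
    also have "\<dots> = (\<Sum>s\<in>?A. qbar T Q n s * (\<Sum>t\<in>B. gl_weight Q s T t * ?f t))"
      by (simp add: sum_distrib_left)
    also have "\<dots> = (\<Sum>s\<in>?A. qbar T Q n s * ((T - s) ^ Suc k / fact (Suc k)))"
    proof (rule sum.cong[OF refl])
      fix s assume s: "s \<in> ?A"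
      have sT: "s \<le> T" using s sA by auto
      have NB: "?N s \<subseteq> B" using s unfolding B_def by auto
      have "(\<Sum>t\<in>B. gl_weight Q s T t * ?f t) = (T - s) ^ Suc k / fact (Suc k)"
        by (rule inner_sum[OF Q sT fB]) (use NB nk in auto)
      then show "qbar T Q n s * (\<Sum>t\<in>B. gl_weight Q s T t * ?f t) = qbar T Q n s * ((T - s) ^ Suc k / fact (Suc k))"
        by simp
    qed
    also have "\<dots> = (\<Sum>s\<in>?A. qbar T Q n s * (T - s) ^ Suc k / fact (Suc k))"
      by (simp only: times_divide_eq_right)
    also have "\<dots> = T ^ (n + Suc k) / fact (n + Suc k)"
    proof -
      have "n + Suc k < 2 * Q" using nk by simp
      then show ?thesis using Suc.IH by blast
    qed
    finally show "(\<Sum>t\<in>{t. qbar T Q (Suc n) t \<noteq> 0}. qbar T Q (Suc n) t * (T - t) ^ k / fact k) = T ^ (Suc n + k) / fact (Suc n + k)"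
      by simp
  qed
qed

theorem lemma3p2:
  fixes T :: real and Q n k :: nat
  assumes "T > 0" and "Q \<ge> 1" and "n + k < 2 * Q"
  shows "(\<Sum>t\<in>{t\<in>{0..T}. qbar T Q n t \<noteq> 0}. qbar T Q n t * (T - t) ^ k / fact k)
           = T ^ (n + k) / fact (n + k)"
proof -
  have "{t\<in>{0..T}. qbar T Q n t \<noteq> 0} = {t. qbar T Q n t \<noteq> 0}"
    using supp_props[OF assms(1,2), of n] by auto
  then show ?thesis using main_claim[OF assms(1,2), of n] assms(3) by simp
qed

end
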